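(* When the greedy algorithm described in the context is run, after the deletion step at any time step $t$, the number of type-2 elements stored in QS is $O(\ell\log t)$.
   Context: A stream of elements from a totally ordered universe arrives one by one. Let $\ell=1/\varepsilon$ be an integer. The stream is partitioned into consecutive chunks of $\ell$ elements; time step $t$ is the arrival of the $t$-th chunk, and $t_0(x)$ is the time step in which $x$ arrives. The summary QS stores elements $e_1<\dots<e_s$ seen so far, each with integers $\mathrm{rmin}(e),\mathrm{rmax}(e)$; by convention $\mathrm{rmin}(e_0)=0$. An element $+\infty$, larger than all others, is inserted at the start of the stream and is always stored as $e_s$. Insert$(x)$: let $e_i$ be the smallest stored element with $e_i>x$; set $\mathrm{rmin}(x)=\mathrm{rmin}(e_{i-1})+1$, $\mathrm{rmax}(x)=\mathrm{rmax}(e_i)$, increase $\mathrm{rmin}(e_j),\mathrm{rmax}(e_j)$ by one for all $j\ge i$, and store $x$. Delete$(e_i)$: remove $e_i$, leaving all other values unchanged. Define $g_i=\mathrm{rmin}(e_i)-\mathrm{rmin}(e_{i-1})$ and $\Delta_i=\mathrm{rmax}(e_i)-\mathrm{rmin}(e_i)$. Band values: each element $x$ has an integer $\mathbf{v}(x)$: at time step $t_0(x)$, $\mathbf{v}(x)=0$; at each time step $t>t_0(x)$, if $t$ is a multiple of $2^{\mathbf{v}(x)}$ then $\mathbf{v}(x)$ is increased by one. Greedy algorithm: at each time step $t$: (i) run Insert on each element of the chunk; (ii) (deletion step) repeatedly run Delete$(e_i)$ for any arbitrarily chosen stored $e_i$ ($i<s$) with $\mathbf{v}(e_i)\le\mathbf{v}(e_{i+1})$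 and $g_i+g_{i+1}+\Delta_{i+1}\le t$, until none exists. After the deletion step at time $t$, a stored element $e_i$ ($i<s$) is called type-1 if $\mathbf{v}(e_i)>\mathbf{v}(e_{i+1})$, and type-2 if it is not type-1 (in which case $g_i+g_{i+1}+\Delta_{i+1}>t$). *)

theory Defs
  imports Complex_Main
begin

text \<open>Entries of the summary QS. key = None encodes the sentinel +infinity.
  arr is the time step t0 in which the element arrived (0 for +infinity,
  which is inserted at the start of the stream).\<close>
record 'a entry =
  key :: "'a option"
  arr :: nat
  rmn :: nat
  rmx :: nat

fun key_less :: "'a::linorder option \<Rightarrow> 'a option \<Rightarrow> bool" where
  "key_less (Some a) (Some b) = (a < b)"
| "key_less (Some a) None = True"
| "key_less None _ = False"

fun band :: "nat \<Rightarrow> nat \<Rightarrow> nat" where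
  "band t0 0 = 0"
| "band t0 (Suc t) =
     (if Suc t \<le> t0 then 0
      else (if 2 ^ band t0 t dvd Suc t then Suc (band t0 t) else band t0 t))"

definition bump :: "'a entry \<Rightarrow> 'a entry" where
  "bump e = e\<lparr>rmn := Suc (rmn e), rmx := Suc (rmx e)\<rparr>"

text \<open>Insert x (arriving at time step t0). The third argument is rmin of the
  predecessor of the current position (rmin(e_0) = 0 initially).\<close>
fun ins :: "'a::linorder \<Rightarrow> nat \<Rightarrow> nat \<Rightarrow> 'a entry list \<Rightarrow> 'a entry list" where
  "ins x t0 p [] = []"
| "ins x t0 p (e # es) =
     (if key_less (Some x) (key e)
      then \<lparr>key = Some x, arr = t0, rmn = Suc p, rmx = rmx e\<rparr> # map bump (e # es)
      else e # ins x t0 (rmn e) es)"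

definition Insert :: "'a::linorder \<Rightarrow> nat \<Rightarrow> 'a entry list \<Rightarrow> 'a entry list" where
  "Insert x t0 qs = ins x t0 0 qs"

text \<open>Initial summary: only +infinity stored (rmin = rmax = 1, as given by Insert
  applied to the empty summary).\<close>
definition init_qs :: "'a entry list" where
  "init_qs = [\<lparr>key = None, arr = 0, rmn = 1, rmx = 1\<rparr>]"

text \<open>0-based indices: list position j corresponds to e_(j+1).\<close>
definition gap :: "'a entry list \<Rightarrow> nat \<Rightarrow> int" where
  "gap qs j = int (rmn (qs ! j)) - (if j = 0 then 0 else int (rmn (qs ! (j - 1))))"

definition delta :: "'a entry list \<Rightarrow> nat \<Rightarrow> int" where
  "delta qs j = int (rmx (qs ! j)) - int (rmn (qs ! j))"

definition vband :: "nat \<Rightarrow> 'a entry list \<Rightarrow> nat \<Rightarrow> nat" where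
  "vband t qs j = band (arr (qs ! j)) t"

definition deletable :: "nat \<Rightarrow> 'a entry list \<Rightarrow> nat \<Rightarrow> bool" where
  "deletable t qs j \<longleftrightarrow> Suc j < length qs \<and> vband t qs j \<le> vband t qs (Suc j)
     \<and> gap qs j + gap qs (Suc j) + delta qs (Suc j) \<le> int t"

definition Delete :: "nat \<Rightarrow> 'a entry list \<Rightarrow> 'a entry list" where
  "Delete j qs = take j qs @ drop (Suc j) qs"

definition del_step :: "nat \<Rightarrow> 'a entry list \<Rightarrow> 'a entry list \<Rightarrow> bool" where
  "del_step t qs qs' \<longleftrightarrow> (\<exists>j. deletable t qs j \<and> qs' = Delete j qs)"

definition insert_chunk :: "nat \<Rightarrow> (nat \<Rightarrow> 'a::linorder) \<Rightarrow> nat \<Rightarrow> 'a entry list \<Rightarrow> 'a entry list" where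
  "insert_chunk l \<sigma> t qs = foldl (\<lambda>q k. Insert (\<sigma> ((t - 1) * l + k)) t q) qs [0..<l]"

text \<open>reach l sigma t qs: qs is a possible content of QS after the deletion step at
  time step t (for some choice of deletions); t = 0 is the initial state.\<close>
inductive reach :: "nat \<Rightarrow> (nat \<Rightarrow> 'a::linorder) \<Rightarrow> nat \<Rightarrow> 'a entry list \<Rightarrow> bool"
  for l \<sigma> where
  start: "reach l \<sigma> 0 init_qs"
| step: "reach l \<sigma> t qs \<Longrightarrow>
         (del_step (Suc t))\<^sup>*\<^sup>* (insert_chunk l \<sigma> (Suc t) qs) qs' \<Longrightarrow>
         (\<forall>j. \<not> deletable (Suc t) qs' j) \<Longrightarrow>
         reach l \<sigma> (Suc t) qs'"

definition type1 :: "nat \<Rightarrow> 'a entry list \<Rightarrow> nat \<Rightarrow> bool" where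
  "type1 t qs j \<longleftrightarrow> Suc j < length qs \<and> vband t qs j > vband t qs (Suc j)"

definition type2 :: "nat \<Rightarrow> 'a entry list \<Rightarrow> nat \<Rightarrow> bool" where
  "type2 t qs j \<longleftrightarrow> Suc j < length qs \<and> \<not> type1 t qs j"

definition num_type2 :: "nat \<Rightarrow> 'a entry list \<Rightarrow> nat" where
  "num_type2 t qs = card {j. type2 t qs j}"

end

theory Submission
  imports Defs
begin
lemma band_le0: "t \<le> a \<Longrightarrow> band a t = 0"
  by (induction t) auto

lemma mod_Suc_ndvd: "\<not> (m::nat) dvd Suc t \<Longrightarrow> Suc t - Suc t mod m = t - t mod m"
proof -
  assume h: "\<not> m dvd Suc t"
  then have "Suc t mod m \<noteq> 0" by (simp add: dvd_eq_mod_eq_0)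
  then have "Suc t mod m = Suc (t mod m)" by (metis mod_Suc)
  then show ?thesis by simp
qed

lemma band_up: "a \<le> t \<Longrightarrow> t - t mod 2 ^ band a t < a + 2 ^ band a t"
proof (induction t)
  case 0
  then show ?case by simp
next
  case (Suc t)
  show ?case
  proof (cases "a = Suc t")
    case True
    then show ?thesis using band_le0[of "Suc t" a] by simp
  next
    case False
    then have at: "a \<le> t" using Suc.prems by simp
    define v where "v = band a t"
    define m :: nat where "m = 2 ^ v"
    have IH: "t - t mod m < a + m" using Suc.IH[OF at] unfolding v_def[symmetric] m_def .
    show ?thesis
    proof (cases "m dvd Suc t")
      case True
      then have b: "band a (Suc t) = Suc v" using at v_def m_def by simp
      have "Suc t mod m = 0" using True by simp
      then have s: "Suc (t mod m) = m" by (metis mod_Suc nat.distinct(1))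
      have le: "t mod m \<le> t" by simp
      have "Suc t < a + 2 * m" using IH s le by linarith
      moreover have "Suc t - Suc t mod 2 ^ Suc v \<le> Suc t" by simp
      ultimately show ?thesis using b m_def by simp
    next
      case False
      then have b: "band a (Suc t) = v" using at v_def m_def by simp
      show ?thesis using IH mod_Suc_ndvd[OF False] b m_def by simp
    qed
  qed
qed

lemma band_low: "a < t \<Longrightarrow> band a t \<ge> 1 \<and> a + 2 ^ (band a t - 1) \<le> t - t mod 2 ^ (band a t - 1)"
proof (induction t)
  case 0
  then show ?case by simp
next
  case (Suc t)
  show ?case
  proof (cases "a = t")
    case True
    then show ?thesis using band_le0[of t a] by simp
  next
    case False
    then have at: "a < t" using Suc.prems by simp
    note IH = Suc.IH[OF at]
    define v where "v = band a t"
    define m :: nat where "m = 2 ^ (v - 1)"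
    have v1: "v \<ge> 1" using IH v_def by simp
    have IH2: "a + m \<le> t - t mod m" using IH unfolding v_def[symmetric] m_def by simp
    show ?thesis
    proof (cases "2 ^ v dvd Suc t")
      case True
      then have b: "band a (Suc t) = Suc v" using at v_def by simp
      have m0: "m > 0" using m_def by simp
      have vv: "2 ^ v = 2 * m" using v1 m_def by (metis Suc_diff_le diff_Suc_1 power_Suc)
      obtain q where k: "Suc t = 2 ^ v * q" using True by (auto elim: dvdE)
      then have q: "Suc t = m * (2 * q)" using vv by (simp add: ac_simps)
      have M: "t - t mod m = m * (t div m)" by (simp add: minus_mod_eq_mult_div)
      have "m * (t div m) \<le> t" using M by (metis diff_le_self)
      then have "m * (t div m) < m * (2 * q)" using q by linarith
      then have "t div m < 2 * q" by simp
      then have "Suc (t div m) \<le> 2 * q" by simp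
      then have "m * Suc (t div m) \<le> m * (2 * q)" by (rule mult_le_mono2)
      then have "m * (t div m) + m \<le> Suc t" using q by simp
      then have "a + 2 ^ v \<le> Suc t" using IH2 M vv by simp
      moreover have "Suc t mod 2 ^ v = 0" using True by simp
      ultimately show ?thesis using b by simp
    next
      case False
      then have b: "band a (Suc t) = v" using at v_def by simp
      have "t - t mod m \<le> Suc t - Suc t mod m"
        by (simp add: minus_mod_eq_mult_div div_le_mono)
      then show ?thesis using IH2 b v1 m_def by simp
    qed
  qed
qed

lemma band_B1: "a < t \<Longrightarrow> band a t \<ge> 1 \<and> a + 2 ^ (band a t - 1) \<le> t"
  using band_low[of a t] by (meson diff_le_self le_trans)

lemma band_B2: "a \<le> t \<Longrightarrow> t < a + 2 ^ Suc (band a t)"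
proof -
  assume "a \<le> t"
  from band_up[OF this] have "t - t mod 2 ^ band a t < a + 2 ^ band a t" .
  moreover have "t mod 2 ^ band a t < 2 ^ band a t" by simp
  moreover have "t = t mod 2 ^ band a t + (t - t mod 2 ^ band a t)" by simp
  ultimately show ?thesis by (simp only: power_Suc)
qed

fun pairsP :: "nat \<Rightarrow> 'a entry list \<Rightarrow> (nat \<times> 'a entry) list" where
  "pairsP p [] = []"
| "pairsP p (e # es) = (p, e) # pairsP (rmn e) es"

lemma length_pairsP[simp]: "length (pairsP p qs) = length qs"
  by (induction qs arbitrary: p) auto

lemma nth_pairsP: "j < length qs \<Longrightarrow> pairsP p qs ! j = (if j = 0 then p else rmn (qs ! (j - 1)), qs ! j)"
proof (induction qs arbitrary: p j)
  case Nil
  then show ?case by simp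
next
  case (Cons e es)
  then show ?case by (cases j) (auto simp: nth_Cons split: nat.splits)
qed

lemma pairsP_bump: "pairsP (Suc p) (map bump es) = map (\<lambda>(q, e). (Suc q, bump e)) (pairsP p es)"
  by (induction es arbitrary: p) (auto simp: bump_def)

lemma pairsP_append: "pairsP p (xs @ ys) = pairsP p xs @ pairsP (last (p # map rmn xs)) ys"
  by (induction xs arbitrary: p) auto

definition goodP :: "nat \<Rightarrow> nat \<times> 'a entry \<Rightarrow> bool" where
  "goodP T z \<longleftrightarrow> fst z \<le> rmn (snd z) \<and> rmx (snd z) \<le> fst z + T
     \<and> rmx (snd z) \<le> rmn (snd z) + arr (snd z) \<and> arr (snd z) \<le> T"

definition contr :: "nat \<Rightarrow> nat set \<Rightarrow> nat \<times> 'a entry \<Rightarrow> int" where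
  "contr T D z = (if band (arr (snd z)) T \<in> D then int (rmn (snd z)) - int (fst z) else 0)"

definition mass :: "nat \<Rightarrow> nat set \<Rightarrow> 'a entry list \<Rightarrow> int" where
  "mass T D qs = sum_list (map (contr T D) (pairsP 0 qs))"

definition downclosed :: "nat set \<Rightarrow> bool" where
  "downclosed D \<longleftrightarrow> (\<forall>u\<in>D. \<forall>v\<le>u. v \<in> D)"

lemma goodP_bump[simp]: "goodP T (Suc q, bump e) = goodP T (q, e)"
  by (auto simp: goodP_def bump_def)

lemma contr_bump[simp]: "contr T D (Suc q, bump e) = contr T D (q, e)"
  by (auto simp: contr_def bump_def)

lemma ins_good:
  assumes "\<forall>z\<in>set (pairsP p qs). goodP T z"
  shows "\<forall>z\<in>set (pairsP p (ins x T p qs)). goodP T z"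
  using assms
proof (induction qs arbitrary: p)
  case Nil
  then show ?case by simp
next
  case (Cons e es)
  show ?case
  proof (cases "key_less (Some x) (key e)")
    case True
    have ge: "goodP T (p, e)" using Cons.prems by simp
    have "goodP T (p, \<lparr>key = Some x, arr = T, rmn = Suc p, rmx = rmx e\<rparr>)"
      using ge by (auto simp: goodP_def)
    moreover have "\<forall>z\<in>set (pairsP (Suc p) (map bump (e # es))). goodP T z"
      using Cons.prems by (auto simp only: pairsP_bump set_map) auto
    ultimately show ?thesis using True by simp
  next
    case False
    then show ?thesis using Cons.IH[of "rmn e"] Cons.prems by simp
  qed
qed

lemma sum_bump: "sum_list (map (contr T D) (pairsP (Suc p) (map bump es))) = sum_list (map (contr T D) (pairsP p es))"
proof -
  have "map (contr T D) (pairsP (Suc p) (map bump es)) = map (contr T D) (pairsP p es)"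
    by (simp add: pairsP_bump case_prod_beta)
  then show ?thesis by simp
qed

lemma band_self[simp]: "band a a = 0"
  using band_le0 by simp

lemma ins_mass:
  "sum_list (map (contr T D) (pairsP p (ins x T p qs))) \<le> sum_list (map (contr T D) (pairsP p qs)) + 1"
proof (induction qs arbitrary: p)
  case Nil
  then show ?case by simp
next
  case (Cons e es)
  show ?case
  proof (cases "key_less (Some x) (key e)")
    case True
    have "sum_list (map (contr T D) (pairsP p (ins x T p (e # es))))
       = contr T D (p, \<lparr>key = Some x, arr = T, rmn = Suc p, rmx = rmx e\<rparr>)
         + sum_list (map (contr T D) (pairsP (Suc p) (map bump (e # es))))"
      using True by simp
    also have "\<dots> \<le> 1 + sum_list (map (contr T D) (pairsP p (e # es)))"
      by (simp only: sum_bump) (simp add: contr_def)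
    finally show ?thesis by simp
  next
    case False
    then show ?thesis using Cons[of "rmn e"] by simp
  qed
qed

lemma fold_ins_good:
  "\<forall>z\<in>set (pairsP 0 qs). goodP T z \<Longrightarrow>
   \<forall>z\<in>set (pairsP 0 (foldl (\<lambda>q k. Insert (h k) T q) qs ks)). goodP T z"
  by (induction ks arbitrary: qs) (auto simp: Insert_def dest: ins_good)

lemma fold_ins_mass:
  "mass T D (foldl (\<lambda>q k. Insert (h k) T q) qs ks) \<le> mass T D qs + int (length ks)"
proof (induction ks arbitrary: qs)
  case Nil
  then show ?case by simp
next
  case (Cons k ks)
  have "mass T D (Insert (h k) T qs) \<le> mass T D qs + 1"
    unfolding mass_def Insert_def by (rule ins_mass)
  then show ?case using Cons[of "Insert (h k) T qs"] by simp
qed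

lemma good_mono: "goodP T z \<Longrightarrow> T \<le> T' \<Longrightarrow> goodP T' z"
  by (auto simp: goodP_def)

lemma del_decomp:
  assumes "Suc j < length qs"
  shows "\<exists>xs a b ys. qs = xs @ a # b # ys \<and> length xs = j \<and> Delete j qs = xs @ b # ys"
proof -
  have d1: "drop j qs = qs ! j # drop (Suc j) qs" using assms by (simp add: Cons_nth_drop_Suc)
  have d2: "drop (Suc j) qs = qs ! Suc j # drop (Suc (Suc j)) qs" using assms by (simp add: Cons_nth_drop_Suc)
  have "qs = take j qs @ qs ! j # qs ! Suc j # drop (Suc (Suc j)) qs"
    using d1 d2 by (metis append_take_drop_id)
  moreover have "Delete j qs = take j qs @ qs ! Suc j # drop (Suc (Suc j)) qs"
    using d2 by (simp add: Delete_def)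
  moreover have "length (take j qs) = j" using assms by simp
  ultimately show ?thesis by blast
qed

lemma gap_pairs: "j < length qs \<Longrightarrow> gap qs j = int (rmn (snd (pairsP 0 qs ! j))) - int (fst (pairsP 0 qs ! j))"
  by (simp add: gap_def nth_pairsP)

lemma delta_pairs: "j < length qs \<Longrightarrow> delta qs j = int (rmx (snd (pairsP 0 qs ! j))) - int (rmn (snd (pairsP 0 qs ! j)))"
  by (simp add: delta_def nth_pairsP)

lemma vband_pairs: "j < length qs \<Longrightarrow> vband T qs j = band (arr (snd (pairsP 0 qs ! j))) T"
  by (simp add: vband_def nth_pairsP)

lemma del_inv:
  assumes del: "deletable T qs j" and good: "\<forall>z\<in>set (pairsP 0 qs). goodP T z" and dc: "downclosed D"
  shows "(\<forall>z\<in>set (pairsP 0 (Delete j qs)). goodP T z) \<and> mass T D (Delete j qs) \<le> mass T D qs"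
proof -
  have len: "Suc j < length qs" using del by (simp add: deletable_def)
  obtain xs a b ys where qs: "qs = xs @ a # b # ys" and lx: "length xs = j" and D: "Delete j qs = xs @ b # ys"
    using del_decomp[OF len] by blast
  define pa where "pa = last (0 # map rmn xs)"
  have P: "pairsP 0 qs = pairsP 0 xs @ (pa, a) # (rmn a, b) # pairsP (rmn b) ys"
    by (simp add: qs pairsP_append pa_def)
  have P': "pairsP 0 (Delete j qs) = pairsP 0 xs @ (pa, b) # pairsP (rmn b) ys"
    by (simp add: D pairsP_append pa_def)
  have Pj: "pairsP 0 qs ! j = (pa, a)" using P lx by (simp add: nth_append)
  have PSj: "pairsP 0 qs ! Suc j = (rmn a, b)" using P lx by (simp add: nth_append)
  have g1: "gap qs j = int (rmn a) - int pa" using gap_pairs[of j qs] len Pj by simp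
  have g2: "gap qs (Suc j) = int (rmn b) - int (rmn a)" using gap_pairs[of "Suc j" qs] len PSj by simp
  have d2: "delta qs (Suc j) = int (rmx b) - int (rmn b)" using delta_pairs[of "Suc j" qs] len PSj by simp
  have v1: "vband T qs j = band (arr a) T" using vband_pairs[of j qs] len Pj by simp
  have v2: "vband T qs (Suc j) = band (arr b) T" using vband_pairs[of "Suc j" qs] len PSj by simp
  have bb: "band (arr a) T \<le> band (arr b) T" using del v1 v2 by (simp add: deletable_def)
  have sm: "int (rmx b) - int pa \<le> int T" using del g1 g2 d2 by (simp add: deletable_def)
  have ga: "goodP T (pa, a)" using good P by simp
  have gb: "goodP T (rmn a, b)" using good P by simp
  have gn: "goodP T (pa, b)" using ga gb sm by (auto simp: goodP_def)
  have c: "contr T D (pa, b) \<le> contr T D (pa, a) + contr T D (rmn a, b)"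
  proof (cases "band (arr b) T \<in> D")
    case True
    then have "band (arr a) T \<in> D" using dc bb by (auto simp: downclosed_def)
    then show ?thesis using True by (simp add: contr_def)
  next
    case False
    then show ?thesis using ga gb by (auto simp: contr_def goodP_def)
  qed
  have "\<forall>z\<in>set (pairsP 0 (Delete j qs)). goodP T z" using good gn unfolding P P' by auto
  moreover have "mass T D (Delete j qs) \<le> mass T D qs" using c unfolding mass_def P P' by simp
  ultimately show ?thesis by blast
qed

lemma dels_inv:
  assumes "(del_step T)\<^sup>*\<^sup>* qs qs'" "\<forall>z\<in>set (pairsP 0 qs). goodP T z"
  shows "(\<forall>z\<in>set (pairsP 0 qs'). goodP T z) \<and> (\<forall>D. downclosed D \<longrightarrow> mass T D qs' \<le> mass T D qs)"
  using assms
proof (induction rule: rtranclp_induct)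
  case base
  then show ?case by simp
next
  case (step y z)
  then obtain j where j: "deletable T y j" "z = Delete j y" by (auto simp: del_step_def)
  have gy: "\<forall>z\<in>set (pairsP 0 y). goodP T z" using step by blast
  show ?case
  proof (intro conjI allI impI)
    show "\<forall>za\<in>set (pairsP 0 z). goodP T za"
      using del_inv[OF j(1) gy, of "{}"] j(2) by (simp add: downclosed_def)
  next
    fix D :: "nat set" assume dc: "downclosed D"
    have "mass T D z \<le> mass T D y" using del_inv[OF j(1) gy dc] j(2) by simp
    then show "mass T D z \<le> mass T D qs" using step dc by force
  qed
qed

definition fstep :: "nat \<Rightarrow> nat \<Rightarrow> nat" where
  "fstep t u = (if 2 ^ u dvd Suc t then Suc u else u)"

lemma band_Suc_f: "a \<le> t \<Longrightarrow> band a (Suc t) = fstep t (band a t)"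
  by (simp add: fstep_def)

lemma fstep_mono: "v \<le> u \<Longrightarrow> fstep t v \<le> fstep t u"
  by (cases "v = u") (auto simp: fstep_def)

lemma downclosed_pre: "downclosed D \<Longrightarrow> downclosed {u. fstep t u \<in> D}"
  unfolding downclosed_def using fstep_mono by blast

lemma mass_shift:
  assumes "\<forall>z\<in>set (pairsP 0 qs). arr (snd z) \<le> t"
  shows "mass (Suc t) D qs = mass t {u. fstep t u \<in> D} qs"
proof -
  have "map (contr (Suc t) D) (pairsP 0 qs) = map (contr t {u. fstep t u \<in> D}) (pairsP 0 qs)"
  proof (intro map_cong refl)
    fix z assume "z \<in> set (pairsP 0 qs)"
    then have "arr (snd z) \<le> t" using assms by blast
    then show "contr (Suc t) D z = contr t {u. fstep t u \<in> D} z"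
      by (simp only: contr_def band_Suc_f mem_Collect_eq)
  qed
  then show ?thesis unfolding mass_def by (rule arg_cong[where f=sum_list])
qed

lemma sum_empty: "sum_list (map (contr T {}) xs) = 0"
  by (induction xs) (auto simp: contr_def)

lemma mass_empty: "mass T {} qs = 0"
  by (simp add: mass_def sum_empty)

lemma reach_inv:
  "reach l \<sigma> t qs \<Longrightarrow> l \<ge> 1 \<Longrightarrow>
   (\<forall>z\<in>set (pairsP 0 qs). goodP (Suc t) z \<and> arr (snd z) \<le> t) \<and>
   (\<forall>D. downclosed D \<longrightarrow> mass t D qs \<le> int l * int (card {a. a \<le> t \<and> band a t \<in> D}))"
proof (induction rule: reach.induct)
  case start
  have P: "pairsP 0 (init_qs :: 'a entry list) = [(0, \<lparr>key = None, arr = 0, rmn = 1, rmx = 1\<rparr>)]"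
    by (simp add: init_qs_def)
  show ?case
  proof (intro conjI allI impI)
    show "\<forall>z\<in>set (pairsP 0 (init_qs :: 'a entry list)). goodP (Suc 0) z \<and> arr (snd z) \<le> 0"
      by (simp add: P goodP_def)
  next
    fix D :: "nat set" assume "downclosed D"
    show "mass 0 D (init_qs :: 'a entry list) \<le> int l * int (card {a. a \<le> 0 \<and> band a 0 \<in> D})"
    proof (cases "0 \<in> D")
      case True
      then have "{a. a \<le> (0::nat) \<and> band a 0 \<in> D} = {0}" by auto
      then show ?thesis using start True by (simp add: mass_def P contr_def)
    next
      case False
      then show ?thesis by (simp add: mass_def P contr_def)
    qed
  qed
next
  case (step t qs qs')
  define T where "T = Suc t"
  note IH = step.IH[OF step.prems]
  define qs1 where "qs1 = insert_chunk l \<sigma> T qs"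
  have g0: "\<forall>z\<in>set (pairsP 0 qs). goodP T z" using IH T_def by blast
  have g1: "\<forall>z\<in>set (pairsP 0 qs1). goodP T z"
    unfolding qs1_def insert_chunk_def by (rule fold_ins_good[OF g0])
  have m1: "mass T D qs1 \<le> mass T D qs + int l" for D
    unfolding qs1_def insert_chunk_def using fold_ins_mass[of T D "\<lambda>k. \<sigma> ((T - 1) * l + k)" qs "[0..<l]"] by simp
  have dl: "(del_step T)\<^sup>*\<^sup>* qs1 qs'" using step.hyps(2) T_def qs1_def by simp
  note DI = dels_inv[OF dl g1]
  show ?case
  proof (intro conjI allI impI)
    show "\<forall>z\<in>set (pairsP 0 qs'). goodP (Suc (Suc t)) z \<and> arr (snd z) \<le> Suc t"
      using DI T_def by (auto simp: goodP_def)
  next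
    fix D :: "nat set" assume dc: "downclosed D"
    show "mass (Suc t) D qs' \<le> int l * int (card {a. a \<le> Suc t \<and> band a (Suc t) \<in> D})"
    proof (cases "D = {}")
      case True
      then show ?thesis by (simp add: mass_empty)
    next
      case False
      then have D0: "0 \<in> D" using dc by (auto simp: downclosed_def)
      have arrs: "\<forall>z\<in>set (pairsP 0 qs). arr (snd z) \<le> t" using IH by blast
      have sets: "{a. a \<le> t \<and> band a (Suc t) \<in> D} = {a. a \<le> t \<and> band a t \<in> {u. fstep t u \<in> D}}"
        using band_Suc_f by auto
      have sets2: "{a. a \<le> Suc t \<and> band a (Suc t) \<in> D} = insert (Suc t) {a. a \<le> t \<and> band a (Suc t) \<in> D}"
        using D0 by auto
      have fin: "finite {a. a \<le> t \<and> band a (Suc t) \<in> D}" by simp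
      have cardeq: "card {a. a \<le> Suc t \<and> band a (Suc t) \<in> D} = Suc (card {a. a \<le> t \<and> band a (Suc t) \<in> D})"
        unfolding sets2 using fin by (simp add: card_insert_if)
      have "mass (Suc t) D qs' \<le> mass T D qs1" using DI dc T_def by simp
      also have "\<dots> \<le> mass T D qs + int l" by (rule m1)
      also have "mass T D qs = mass t {u. fstep t u \<in> D} qs" using mass_shift[OF arrs] T_def by simp
      also have "\<dots> \<le> int l * int (card {a. a \<le> t \<and> band a t \<in> {u. fstep t u \<in> D}})"
        using IH downclosed_pre[OF dc] by blast
      also have "\<dots> = int l * int (card {a. a \<le> t \<and> band a (Suc t) \<in> D})" using sets by simp
      finally show ?thesis using cardeq by (simp add: algebra_simps)
    qed
  qed
qed

lemma count_w:
  fixes G :: "nat \<Rightarrow> int" and A :: "nat \<Rightarrow> nat"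
  assumes Gnn: "\<forall>j<n. G j \<ge> 0" and Alt: "\<forall>j<n. A j \<le> t"
    and big: "\<forall>j. Suc j < n \<longrightarrow> band (A j) t \<le> band (A (Suc j)) t \<longrightarrow> int t - int (A (Suc j)) < G j + G (Suc j)"
    and ms: "(\<Sum>j | j < n \<and> band (A j) t \<le> w. G j) \<le> int l * 2 ^ Suc w"
  shows "card {j. Suc j < n \<and> band (A j) t \<le> band (A (Suc j)) t \<and> band (A (Suc j)) t = w} \<le> 8 * l"
proof -
  define Tw where "Tw = {j. Suc j < n \<and> band (A j) t \<le> band (A (Suc j)) t \<and> band (A (Suc j)) t = w}"
  define S where "S = {j. j < n \<and> band (A j) t \<le> w}"
  have finS: "finite S" unfolding S_def by simp
  have TS: "Tw \<subseteq> S" unfolding Tw_def S_def by auto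
  have finT: "finite Tw" using finS TS finite_subset by blast
  have STS: "Suc ` Tw \<subseteq> S" unfolding Tw_def S_def by auto
  have each: "2 ^ w \<le> 2 * (G j + G (Suc j))" if j: "j \<in> Tw" for j
  proof -
    define a where "a = A (Suc j)"
    have jn: "Suc j < n" and bw: "band a t = w" and bl: "band (A j) t \<le> band a t"
      using j unfolding Tw_def a_def by auto
    have at: "a \<le> t" using Alt jn a_def by simp
    have gg: "int t - int a < G j + G (Suc j)" using big jn bl a_def by simp
    show ?thesis
    proof (cases "w = 0")
      case True
      then show ?thesis using gg at by simp
    next
      case False
      then have "a \<noteq> t" using bw by auto
      then have "a < t" using at by simp
      then have "a + 2 ^ (w - 1) \<le> t" using band_B1[of a t] bw by simp
      then have "int (a + 2 ^ (w - 1)) \<le> int t" by (simp only: of_nat_le_iff)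
      then have "(2::int) ^ (w - 1) \<le> int t - int a" by simp
      then have "(2::int) ^ (w - 1) < G j + G (Suc j)" using gg by simp
      moreover have "(2::int) ^ w = 2 * 2 ^ (w - 1)" using False
        by (metis Suc_diff_1 neq0_conv power_Suc)
      ultimately show ?thesis by simp
    qed
  qed
  have s1: "(\<Sum>j\<in>Tw. G j) \<le> (\<Sum>j\<in>S. G j)"
    using finS TS Gnn unfolding S_def by (intro sum_mono2) auto
  have "(\<Sum>j\<in>Tw. G (Suc j)) = (\<Sum>j\<in>Suc ` Tw. G j)"
    by (simp add: sum.reindex)
  also have "\<dots> \<le> (\<Sum>j\<in>S. G j)"
    using finS STS Gnn unfolding S_def by (intro sum_mono2) auto
  finally have s2: "(\<Sum>j\<in>Tw. G (Suc j)) \<le> (\<Sum>j\<in>S. G j)" .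
  have "int (card Tw) * 2 ^ w = (\<Sum>j\<in>Tw. (2::int) ^ w)" by simp
  also have "\<dots> \<le> (\<Sum>j\<in>Tw. 2 * (G j + G (Suc j)))" using each by (intro sum_mono) auto
  also have "\<dots> = 2 * (\<Sum>j\<in>Tw. G j) + 2 * (\<Sum>j\<in>Tw. G (Suc j))"
    by (simp add: sum_distrib_left sum.distrib)
  also have "\<dots> \<le> 4 * (\<Sum>j\<in>S. G j)" using s1 s2 by simp
  also have "\<dots> \<le> 4 * (int l * 2 ^ Suc w)" using ms unfolding S_def by simp
  also have "\<dots> = int (8 * l) * 2 ^ w" by simp
  finally have "int (card Tw) * 2 ^ w \<le> int (8 * l) * 2 ^ w" .
  then have "int (card Tw) \<le> int (8 * l)" by (simp add: mult_le_cancel_right)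
  then show ?thesis unfolding Tw_def by simp
qed

lemma count_all:
  fixes G :: "nat \<Rightarrow> int" and A :: "nat \<Rightarrow> nat"
  assumes Gnn: "\<forall>j<n. G j \<ge> 0" and Alt: "\<forall>j<n. A j \<le> t"
    and big: "\<forall>j. Suc j < n \<longrightarrow> band (A j) t \<le> band (A (Suc j)) t \<longrightarrow> int t - int (A (Suc j)) < G j + G (Suc j)"
    and ms: "\<forall>w. (\<Sum>j | j < n \<and> band (A j) t \<le> w. G j) \<le> int l * 2 ^ Suc w"
    and W: "\<forall>a\<le>t. band a t \<le> W"
  shows "card {j. Suc j < n \<and> band (A j) t \<le> band (A (Suc j)) t} \<le> 8 * l * (W + 1)"
proof -
  define Tw where "Tw w = {j. Suc j < n \<and> band (A j) t \<le> band (A (Suc j)) t \<and> band (A (Suc j)) t = w}" for w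
  have sub: "{j. Suc j < n \<and> band (A j) t \<le> band (A (Suc j)) t} \<subseteq> (\<Union>w\<in>{..W}. Tw w)"
  proof
    fix j assume "j \<in> {j. Suc j < n \<and> band (A j) t \<le> band (A (Suc j)) t}"
    then have "Suc j < n" "band (A j) t \<le> band (A (Suc j)) t" by auto
    moreover have "band (A (Suc j)) t \<le> W" using W Alt \<open>Suc j < n\<close> by simp
    ultimately show "j \<in> (\<Union>w\<in>{..W}. Tw w)" unfolding Tw_def by auto
  qed
  have finTw: "finite (Tw w)" for w by (rule finite_subset[of _ "{..<n}"]) (auto simp: Tw_def)
  have finU: "finite (\<Union>w\<in>{..W}. Tw w)" using finTw by auto
  have "card {j. Suc j < n \<and> band (A j) t \<le> band (A (Suc j)) t} \<le> card (\<Union>w\<in>{..W}. Tw w)"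
    using sub finU by (rule card_mono[rotated])
  also have "\<dots> \<le> (\<Sum>w\<in>{..W}. card (Tw w))" by (rule card_UN_le) (simp add: finTw)
  also have "\<dots> \<le> (\<Sum>w\<in>{..W}. 8 * l)"
    using count_w[OF Gnn Alt big] ms unfolding Tw_def by (intro sum_mono) blast
  also have "\<dots> = 8 * l * (W + 1)" by simp
  finally show ?thesis .
qed

lemma band_log: "a \<le> t \<Longrightarrow> band a t \<le> nat \<lfloor>log 2 (real t)\<rfloor> + 1"
proof -
  assume at: "a \<le> t"
  define b where "b = band a t"
  show ?thesis
  proof (cases "b = 0")
    case True
    then show ?thesis using b_def by simp
  next
    case False
    then have "a \<noteq> t" using b_def by auto
    then have "a < t" using at by simp
    then have "a + 2 ^ (b - 1) \<le> t" using band_B1[of a t] b_def by simp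
    then have "2 ^ (b - 1) \<le> t" by simp
    then have "real (b - 1) \<le> log 2 (real t)" by (rule le_log2_of_power)
    then have "int (b - 1) \<le> \<lfloor>log 2 (real t)\<rfloor>" by (simp add: le_floor_iff)
    then show ?thesis using b_def False by linarith
  qed
qed

lemma card_band_le: "card {a. a \<le> t \<and> band a t \<le> w} \<le> 2 ^ Suc w"
proof -
  have "{a. a \<le> t \<and> band a t \<le> w} \<subseteq> {Suc t - 2 ^ Suc w .. t}"
  proof
    fix a assume "a \<in> {a. a \<le> t \<and> band a t \<le> w}"
    then have at: "a \<le> t" and bw: "band a t \<le> w" by auto
    have "t < a + 2 ^ Suc (band a t)" using band_B2[OF at] .
    moreover have "(2::nat) ^ Suc (band a t) \<le> 2 ^ Suc w" using bw by (intro power_increasing) auto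
    ultimately have "t < a + 2 ^ Suc w" by linarith
    then show "a \<in> {Suc t - 2 ^ Suc w .. t}" using at by auto
  qed
  then have "card {a. a \<le> t \<and> band a t \<le> w} \<le> card {Suc t - 2 ^ Suc w .. t}"
    by (intro card_mono) auto
  also have "\<dots> \<le> 2 ^ Suc w" by simp
  finally show ?thesis .
qed

lemma mass_sum:
  "mass t D qs = (\<Sum>j | j < length qs \<and> band (arr (qs ! j)) t \<in> D. gap qs j)"
proof -
  have "mass t D qs = (\<Sum>j = 0..<length qs. contr t D (pairsP 0 qs ! j))"
    unfolding mass_def by (simp add: sum_list_sum_nth)
  also have "\<dots> = (\<Sum>j\<in>{0..<length qs}. if band (arr (qs ! j)) t \<in> D then gap qs j else 0)"
    by (intro sum.cong refl) (simp add: contr_def gap_pairs nth_pairsP)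
  also have "\<dots> = (\<Sum>j \<in> {j \<in> {0..<length qs}. band (arr (qs ! j)) t \<in> D}. gap qs j)"
    by (rule sum.inter_filter[symmetric]) simp
  also have "{j \<in> {0..<length qs}. band (arr (qs ! j)) t \<in> D} = {j. j < length qs \<and> band (arr (qs ! j)) t \<in> D}"
    by auto
  finally show ?thesis .
qed

lemma reach_final:
  assumes r: "reach l \<sigma> t qs" and t1: "t \<ge> 1"
  shows "\<forall>j. \<not> deletable t qs j"
  using r t1 by (cases rule: reach.cases) auto

theorem mainTheorem5:
  "\<exists>C::real. \<forall>(l::nat) (\<sigma>::nat \<Rightarrow> 'a::linorder) (t::nat) qs.
     l \<ge> 1 \<longrightarrow> inj \<sigma> \<longrightarrow> t \<ge> 1 \<longrightarrow> reach l \<sigma> t qs \<longrightarrow>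
     real (num_type2 t qs) \<le> C * real l * (1 + log 2 (real t))"
proof (intro exI[of _ 16] allI impI)
  fix l :: nat and \<sigma> :: "nat \<Rightarrow> 'a::linorder" and t :: nat and qs
  assume l1: "l \<ge> 1" and "inj \<sigma>" and t1: "t \<ge> 1" and r: "reach l \<sigma> t qs"
  note RI = reach_inv[OF r l1]
  define n where "n = length qs"
  define G where "G = gap qs"
  define A where "A j = arr (qs ! j)" for j
  have gd: "goodP (Suc t) (pairsP 0 qs ! j)" "arr (snd (pairsP 0 qs ! j)) \<le> t" if "j < n" for j
    using RI that nth_mem[of j "pairsP 0 qs"] n_def by auto
  have Gnn: "\<forall>j<n. G j \<ge> 0"
    using gd(1) by (auto simp: G_def gap_pairs n_def goodP_def)
  have Alt: "\<forall>j<n. A j \<le> t"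
    using gd(2) by (auto simp: A_def nth_pairsP n_def)
  have nd: "\<forall>j. \<not> deletable t qs j" by (rule reach_final[OF r t1])
  have big: "\<forall>j. Suc j < n \<longrightarrow> band (A j) t \<le> band (A (Suc j)) t \<longrightarrow> int t - int (A (Suc j)) < G j + G (Suc j)"
  proof (intro allI impI)
    fix j assume jn: "Suc j < n" and bl: "band (A j) t \<le> band (A (Suc j)) t"
    have "\<not> (gap qs j + gap qs (Suc j) + delta qs (Suc j) \<le> int t)"
      using nd[rule_format, of j] jn bl by (simp add: deletable_def vband_def A_def n_def)
    moreover have "delta qs (Suc j) \<le> int (A (Suc j))"
      using gd(1)[OF jn] jn by (auto simp: delta_pairs A_def n_def goodP_def nth_pairsP)
    ultimately show "int t - int (A (Suc j)) < G j + G (Suc j)" unfolding G_def by linarith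
  qed
  have ms: "\<forall>w. (\<Sum>j | j < n \<and> band (A j) t \<le> w. G j) \<le> int l * 2 ^ Suc w"
  proof
    fix w
    have dc: "downclosed {..w}" by (auto simp: downclosed_def)
    have "(\<Sum>j | j < n \<and> band (A j) t \<le> w. G j) = mass t {..w} qs"
      by (simp add: mass_sum n_def A_def G_def)
    also have "\<dots> \<le> int l * int (card {a. a \<le> t \<and> band a t \<in> {..w}})" using RI dc by blast
    also have "\<dots> \<le> int l * 2 ^ Suc w"
    proof -
      have "card {a. a \<le> t \<and> band a t \<in> {..w}} \<le> 2 ^ Suc w" using card_band_le[of t w] by simp
      then have "int (card {a. a \<le> t \<and> band a t \<in> {..w}}) \<le> 2 ^ Suc w"
        by (metis of_nat_le_iff of_nat_numeral of_nat_power)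
      then show ?thesis by (simp add: mult_left_mono)
    qed
    finally show "(\<Sum>j | j < n \<and> band (A j) t \<le> w. G j) \<le> int l * 2 ^ Suc w" .
  qed
  define W where "W = nat \<lfloor>log 2 (real t)\<rfloor> + 1"
  have Wb: "\<forall>a\<le>t. band a t \<le> W" using band_log W_def by blast
  have c: "card {j. Suc j < n \<and> band (A j) t \<le> band (A (Suc j)) t} \<le> 8 * l * (W + 1)"
    by (rule count_all[OF Gnn Alt big ms Wb])
  have nt: "num_type2 t qs = card {j. Suc j < n \<and> band (A j) t \<le> band (A (Suc j)) t}"
    unfolding num_type2_def type2_def type1_def vband_def A_def n_def
    by (intro arg_cong[where f=card]) auto
  have lg0: "log 2 (real t) \<ge> 0" using t1 by simp
  have fl: "real (nat \<lfloor>log 2 (real t)\<rfloor>) \<le> log 2 (real t)" using lg0 by simp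
  have "real (num_type2 t qs) \<le> real (8 * l * (W + 1))" using nt c by (simp only: of_nat_le_iff)
  also have "\<dots> = 8 * real l * (real (nat \<lfloor>log 2 (real t)\<rfloor>) + 2)" by (simp add: W_def algebra_simps)
  also have "\<dots> \<le> 8 * real l * (log 2 (real t) + 2)" using fl by (intro mult_left_mono) auto
  also have "\<dots> \<le> 16 * real l * (1 + log 2 (real t))" using lg0 by (simp add: algebra_simps)
  finally show "real (num_type2 t qs) \<le> 16 * real l * (1 + log 2 (real t))" .
qed

end
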